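(* Let $R=\{r_{ab}\}_{N\times N}$ be the transition rate matrix of an irreducible continuous-time Markov jump process on states $\{1,\dots,N\}$: for $a\neq b$, $r_{ab}\ge 0$ is the rate of jumps from $b$ to $a$, and $r_{bb}=-\sum_{a\neq b} r_{ab}$. For a complex number $\omega$ with $\operatorname{Re}\omega>0$, let $\hat{P}(\omega)=\int_0^\infty e^{-\omega t}e^{Rt}\,\mathrm{d}t$ (the Laplace transform of the transition probability matrix). Fix distinct states $i\neq j$ and regard $R$ (hence $\hat P(\omega)$) as a function of the single off-diagonal rate $r_{ij}>0$, with all other off-diagonal rates fixed and $r_{jj}=-\sum_{a\neq j}r_{aj}$ adjusted accordingly. For $m=1,2$, let $a^{(m)}_l$ ($l=1,\dots,N$) and $b^{(m)}_{kl}$ ($k\neq l$, $(k,l)\neq(i,j)$) be coefficients not depending on $r_{ij}$ (defining observables that do not count transitions $j\to i$), and set $c^{(m)}_l=a^{(m)}_l+\sum_{k\neq l,\ (k,l)\neq(i,j)} b^{(m)}_{kl}\,r_{kl}$. Define $$\hat\chi_{ij}^{(1)(2)}(\omega)=\frac{\sum_l c^{(1)}_l\left[\hat P_{li}(\omega)-\hat P_{lj}(\omega)\right]}{\sum_l c^{(2)}_l\left[\hat P_{li}(\omega)-\hat P_{lj}(\omega)\right]}.$$ Then for $\operatorname{Re}\omega>0$, at every value of $r_{ij}$ where the denominator is nonzero, $\frac{\mathrm{d}\hat\chi_{ij}^{(1)(2)}(\omega)}{\mathrm{d}r_{ij}}=0$.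
   Context: $\hat\chi_{ij}^{(1)(2)}(\omega)$ is the ratio of the responses to $r_{ij}$ of the Laplace transforms $\hat Q_m(\omega)=\int_0^\infty e^{-\omega\tau}\langle Q_m(\tau)\rangle\,\mathrm{d}\tau$ of the observables $Q_m=\sum_l a^{(m)}_l\tau_l(\tau)+\sum_{k\neq l,(k,l)\neq(i,j)} b^{(m)}_{kl}n_{kl}(\tau)$, where $\tau_l(\tau)$ is the time spent in state $l$ up to time $\tau$ and $n_{kl}(\tau)$ the number of jumps $l\to k$ up to time $\tau$, for the process relaxing from an arbitrary fixed initial distribution under time-independent rates. *)

theory Defs
  imports "HOL-Analysis.Analysis"
begin

text \<open>Matrices are indexed by a finite type of states; the entry A$a$b is row a, column b.
  For the rate matrix, R$a$b (a \<noteq> b) is the rate of jumps from b to a.\<close>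

primrec matpow :: "real^'n::finite^'n \<Rightarrow> nat \<Rightarrow> real^'n^'n" where
  "matpow A 0 = mat 1"
| "matpow A (Suc k) = A ** matpow A k"

definition mexp :: "real \<Rightarrow> real^'n::finite^'n \<Rightarrow> real^'n^'n" where
  "mexp t A = (\<chi> a b. (\<Sum>k. t ^ k / fact k * (matpow A k $ a $ b)))"

definition offrate :: "('n \<Rightarrow> 'n \<Rightarrow> real) \<Rightarrow> 'n \<Rightarrow> 'n \<Rightarrow> real \<Rightarrow> 'n \<Rightarrow> 'n \<Rightarrow> real" where
  "offrate r i j x a b = (if a = b then 0 else if (a, b) = (i, j) then x else r a b)"

definition rate_matrix :: "('n::finite \<Rightarrow> 'n \<Rightarrow> real) \<Rightarrow> 'n \<Rightarrow> 'n \<Rightarrow> real \<Rightarrow> real^'n^'n" where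
  "rate_matrix r i j x = (\<chi> a b. if a = b then - (\<Sum>c\<in>UNIV - {b}. offrate r i j x c b)
                                    else offrate r i j x a b)"

definition irreducible_rates :: "real^'n::finite^'n \<Rightarrow> bool" where
  "irreducible_rates R \<longleftrightarrow> (\<forall>a b. (b, a) \<in> {(u, v). u \<noteq> v \<and> R $ v $ u > 0}\<^sup>*)"

definition Phat :: "real^'n::finite^'n \<Rightarrow> complex \<Rightarrow> 'n \<Rightarrow> 'n \<Rightarrow> complex" where
  "Phat R \<omega> a b = integral {0..} (\<lambda>t::real. exp (- \<omega> * complex_of_real t) * complex_of_real (mexp t R $ a $ b))"

definition coef :: "('n::finite \<Rightarrow> real) \<Rightarrow> ('n \<Rightarrow> 'n \<Rightarrow> real) \<Rightarrow> ('n \<Rightarrow> 'n \<Rightarrow> real) \<Rightarrow> 'n \<Rightarrow> 'n \<Rightarrow> 'n \<Rightarrow> real" where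
  "coef A B r i j l = A l + (\<Sum>k\<in>{k. k \<noteq> l \<and> (k, l) \<noteq> (i, j)}. B k l * r k l)"

definition chi_hat ::
  "('n::finite \<Rightarrow> 'n \<Rightarrow> real) \<Rightarrow> 'n \<Rightarrow> 'n \<Rightarrow> ('n \<Rightarrow> real) \<Rightarrow> ('n \<Rightarrow> 'n \<Rightarrow> real)
    \<Rightarrow> ('n \<Rightarrow> real) \<Rightarrow> ('n \<Rightarrow> 'n \<Rightarrow> real) \<Rightarrow> complex \<Rightarrow> real \<Rightarrow> complex" where
  "chi_hat r i j A1 B1 A2 B2 \<omega> x =
     (\<Sum>l\<in>UNIV. complex_of_real (coef A1 B1 r i j l) * (Phat (rate_matrix r i j x) \<omega> l i - Phat (rate_matrix r i j x) \<omega> l j))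
   / (\<Sum>l\<in>UNIV. complex_of_real (coef A2 B2 r i j l) * (Phat (rate_matrix r i j x) \<omega> l i - Phat (rate_matrix r i j x) \<omega> l j))"

end

theory Submission
  imports Defs
begin


lemma matpow_entry_Suc:
  "matpow A (Suc k) $ a $ b = (\<Sum>c\<in>UNIV. A $ a $ c * matpow A k $ c $ b)"
  by (simp add: matrix_matrix_mult_def)

lemma matpow_Suc': "matpow A (Suc k) = matpow A k ** A"
proof (induction k)
  case 0 then show ?case by (simp add: matrix_mul_lid matrix_mul_rid)
next
  case (Suc k)
  have "matpow A (Suc (Suc k)) = A ** (matpow A k ** A)" using Suc by simp
  also have "\<dots> = matpow A (Suc k) ** A" by (simp add: matrix_mul_assoc)
  finally show ?case .
qed

lemma matpow_entry_Suc':
  "matpow A (Suc k) $ a $ b = (\<Sum>c\<in>UNIV. matpow A k $ a $ c * A $ c $ b)"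
  by (simp only: matpow_Suc') (simp add: matrix_matrix_mult_def)

definition msz :: "real^'n::finite^'n \<Rightarrow> real" where
  "msz A = (\<Sum>a\<in>UNIV. \<Sum>b\<in>UNIV. \<bar>A $ a $ b\<bar>)"

lemma msz_ge: "(\<Sum>c\<in>UNIV. \<bar>A $ a $ c\<bar>) \<le> msz A"
  unfolding msz_def
  by (rule member_le_sum[where f="\<lambda>a. \<Sum>c\<in>UNIV. \<bar>A $ a $ c\<bar>"]) (auto intro: sum_nonneg)

lemma msz_nonneg: "0 \<le> msz A"
  unfolding msz_def by (auto intro: sum_nonneg)

lemma matpow_bound: "\<bar>matpow A k $ a $ b\<bar> \<le> msz A ^ k"
proof (induction k arbitrary: a b)
  case 0 then show ?case by (simp add: mat_def)
next
  case (Suc k)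
  have "\<bar>matpow A (Suc k) $ a $ b\<bar> \<le> (\<Sum>c\<in>UNIV. \<bar>A $ a $ c\<bar> * \<bar>matpow A k $ c $ b\<bar>)"
    unfolding matpow_entry_Suc by (rule order_trans[OF sum_abs]) (simp add: abs_mult)
  also have "\<dots> \<le> (\<Sum>c\<in>UNIV. \<bar>A $ a $ c\<bar> * msz A ^ k)"
    by (intro sum_mono mult_left_mono Suc.IH) auto
  also have "\<dots> = (\<Sum>c\<in>UNIV. \<bar>A $ a $ c\<bar>) * msz A ^ k" by (simp add: sum_distrib_right)
  also have "\<dots> \<le> msz A * msz A ^ k"
    by (intro mult_right_mono msz_ge) (simp add: msz_nonneg)
  finally show ?case by simp
qed

lemma summable_mser:
  "summable (\<lambda>k. \<bar>t ^ k / fact k * matpow A (k + m) $ a $ b\<bar>)"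
proof -
  have "summable (\<lambda>k. msz A ^ m * (inverse (fact k) * (\<bar>t\<bar> * msz A) ^ k))"
    by (intro summable_mult summable_exp)
  then show ?thesis
  proof (rule summable_comparison_test')
    fix k :: nat
    have "\<bar>t ^ k / fact k * matpow A (k + m) $ a $ b\<bar> = \<bar>t\<bar> ^ k / fact k * \<bar>matpow A (k + m) $ a $ b\<bar>"
      by (simp add: abs_mult power_abs)
    also have "\<dots> \<le> \<bar>t\<bar> ^ k / fact k * msz A ^ (k + m)"
      by (intro mult_left_mono matpow_bound) auto
    also have "\<dots> = msz A ^ m * (inverse (fact k) * (\<bar>t\<bar> * msz A) ^ k)"
      by (simp add: power_add power_mult_distrib field_simps)
    finally show "norm (\<bar>t ^ k / fact k * matpow A (k + m) $ a $ b\<bar>) \<le> msz A ^ m * (inverse (fact k) * (\<bar>t\<bar> * msz A) ^ k)"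
      by simp
  qed
qed

lemma summable_mser0: "summable (\<lambda>k. t ^ k / fact k * matpow A k $ a $ b)"
  using summable_rabs_cancel[OF summable_mser[of t A 0 a b]] by simp

lemma summable_mser1: "summable (\<lambda>k. t ^ k / fact k * matpow A (Suc k) $ a $ b)"
  using summable_rabs_cancel[OF summable_mser[of t A 1 a b]] by simp

definition dmexp :: "real \<Rightarrow> real^'n::finite^'n \<Rightarrow> 'n \<Rightarrow> 'n \<Rightarrow> real" where
  "dmexp t A a b = (\<Sum>k. t ^ k / fact k * matpow A (Suc k) $ a $ b)"

lemma mexp_deriv: "((\<lambda>t. mexp t A $ a $ b) has_real_derivative dmexp t A a b) (at t)"
proof -
  define c where "c k = matpow A k $ a $ b / fact k" for k
  have eq: "mexp s A $ a $ b = (\<Sum>k. c k * s ^ k)" for s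
  proof -
    have "(\<lambda>k. s ^ k / fact k * matpow A k $ a $ b) = (\<lambda>k. c k * s ^ k)"
      by (rule ext) (simp add: c_def)
    then show ?thesis by (simp add: mexp_def)
  qed
  have "((\<lambda>s. \<Sum>k. c k * s ^ k) has_field_derivative (\<Sum>k. diffs c k * t ^ k)) (at t)"
    by (rule termdiffs_strong_converges_everywhere)
      (use summable_mser0 in \<open>simp add: c_def mult.commute\<close>)
  moreover have "(\<Sum>k. diffs c k * t ^ k) = dmexp t A a b"
    unfolding dmexp_def diffs_def c_def
    by (rule suminf_cong) (simp add: field_simps del: of_nat_Suc)
  ultimately show ?thesis by (simp add: eq)
qed

lemma dmexp_left: "dmexp t A a b = (\<Sum>c\<in>UNIV. A $ a $ c * mexp t A $ c $ b)"
proof -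
  have "dmexp t A a b = (\<Sum>k. \<Sum>c\<in>UNIV. A $ a $ c * (t ^ k / fact k * matpow A k $ c $ b))"
    unfolding dmexp_def matpow_entry_Suc by (simp add: sum_distrib_left mult_ac)
  also have "\<dots> = (\<Sum>c\<in>UNIV. \<Sum>k. A $ a $ c * (t ^ k / fact k * matpow A k $ c $ b))"
    by (rule suminf_sum) (intro summable_mult summable_mser0)
  also have "\<dots> = (\<Sum>c\<in>UNIV. A $ a $ c * mexp t A $ c $ b)"
    by (simp only: suminf_mult[OF summable_mser0] mexp_def vec_lambda_beta)
  finally show ?thesis .
qed

lemma dmexp_right: "dmexp t A a b = (\<Sum>c\<in>UNIV. mexp t A $ a $ c * A $ c $ b)"
proof -
  have "dmexp t A a b = (\<Sum>k. \<Sum>c\<in>UNIV. A $ c $ b * (t ^ k / fact k * matpow A k $ a $ c))"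
    unfolding dmexp_def matpow_entry_Suc' by (simp add: sum_distrib_left mult_ac)
  also have "\<dots> = (\<Sum>c\<in>UNIV. \<Sum>k. A $ c $ b * (t ^ k / fact k * matpow A k $ a $ c))"
    by (rule suminf_sum) (intro summable_mult summable_mser0)
  also have "\<dots> = (\<Sum>c\<in>UNIV. mexp t A $ a $ c * A $ c $ b)"
    by (simp only: suminf_mult[OF summable_mser0] mexp_def vec_lambda_beta mult.commute)
  finally show ?thesis .
qed



definition ratem :: "real^'n::finite^'n \<Rightarrow> bool" where
  "ratem R \<longleftrightarrow> (\<forall>a b. a \<noteq> b \<longrightarrow> 0 \<le> R $ a $ b) \<and> (\<forall>b. (\<Sum>a\<in>UNIV. R $ a $ b) = 0)"

lemma colsum_matpow_Suc:
  assumes "ratem R" shows "(\<Sum>a\<in>UNIV. matpow R (Suc k) $ a $ b) = 0"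
proof -
  have "(\<Sum>a\<in>UNIV. matpow R (Suc k) $ a $ b) = (\<Sum>c\<in>UNIV. (\<Sum>a\<in>UNIV. R $ a $ c) * matpow R k $ c $ b)"
    unfolding matpow_entry_Suc by (subst sum.swap) (simp add: sum_distrib_right)
  also have "\<dots> = 0" using assms by (simp add: ratem_def)
  finally show ?thesis .
qed

lemma colsum_mexp:
  assumes "ratem R" shows "(\<Sum>a\<in>UNIV. mexp t R $ a $ b) = 1"
proof -
  have "(\<Sum>a\<in>UNIV. mexp t R $ a $ b) = (\<Sum>k. \<Sum>a\<in>UNIV. t ^ k / fact k * matpow R k $ a $ b)"
    unfolding mexp_def vec_lambda_beta by (rule suminf_sum[symmetric]) (rule summable_mser0)
  also have "(\<lambda>k. \<Sum>a\<in>UNIV. t ^ k / fact k * matpow R k $ a $ b) = (\<lambda>k. if k = 0 then 1 else 0)"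
  proof
    fix k show "(\<Sum>a\<in>UNIV. t ^ k / fact k * matpow R k $ a $ b) = (if k = 0 then 1 else 0)"
    proof (cases k)
      case 0 then show ?thesis by (simp add: mat_def)
    next
      case (Suc m)
      then show ?thesis
        unfolding Suc sum_distrib_left[symmetric] colsum_matpow_Suc[OF assms] by simp
    qed
  qed
  also have "(\<Sum>k. (if k = 0 then 1 else 0 :: real)) = 1"
    using sums_single[of 0 "\<lambda>_. 1::real"] by (simp add: sums_iff)
  finally show ?thesis .
qed

lemma matpow_shift_binom:
  fixes R :: "real^'n::finite^'n" and q :: real
  defines "Q \<equiv> (\<chi> a b. R $ a $ b + (if a = b then q else 0))"
  shows "matpow Q n $ a $ b = (\<Sum>k\<le>n. of_nat (n choose k) * q ^ k * matpow R (n - k) $ a $ b)"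
proof (induction n arbitrary: a b)
  case 0 then show ?case by simp
next
  case (Suc n)
  define f where "f m = matpow R m $ a $ b" for m
  have "matpow Q (Suc n) $ a $ b = (\<Sum>c\<in>UNIV. R $ a $ c * matpow Q n $ c $ b) + q * matpow Q n $ a $ b"
  proof -
    have XX: "(\<Sum>c\<in>UNIV. (R $ a $ c + (if a = c then q else 0)) * X c) = (\<Sum>c\<in>UNIV. R $ a $ c * X c) + q * X a" for X
    proof -
      have "(\<Sum>c\<in>UNIV. (R $ a $ c + (if a = c then q else 0)) * X c) = (\<Sum>c\<in>UNIV. R $ a $ c * X c) + (\<Sum>c\<in>UNIV. (if a = c then q else 0) * X c)"
        by (simp only: distrib_right sum.distrib)
      also have "(\<Sum>c\<in>UNIV. (if a = c then q else 0) * X c) = (\<Sum>c\<in>UNIV. (if a = c then q * X c else 0))"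
        by (rule sum.cong) auto
      finally show ?thesis by simp
    qed
    show ?thesis unfolding matpow_entry_Suc Q_def vec_lambda_beta by (rule XX)
  qed
  also have "(\<Sum>c\<in>UNIV. R $ a $ c * matpow Q n $ c $ b)
      = (\<Sum>k\<le>n. of_nat (n choose k) * q ^ k * f (Suc n - k))"
  proof -
    have "(\<Sum>c\<in>UNIV. R $ a $ c * matpow Q n $ c $ b)
       = (\<Sum>k\<le>n. of_nat (n choose k) * q ^ k * (\<Sum>c\<in>UNIV. R $ a $ c * matpow R (n - k) $ c $ b))"
      unfolding Suc.IH by (simp add: sum_distrib_left sum_distrib_right mult_ac sum.swap[of _ UNIV])
    also have "\<dots> = (\<Sum>k\<le>n. of_nat (n choose k) * q ^ k * f (Suc n - k))"
      by (intro sum.cong refl) (simp add: f_def matpow_entry_Suc[symmetric] Suc_diff_le)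
    finally show ?thesis .
  qed
  also have "q * matpow Q n $ a $ b = (\<Sum>k\<le>n. of_nat (n choose k) * q ^ Suc k * f (n - k))"
    unfolding Suc.IH f_def by (simp add: sum_distrib_left mult_ac)
  also have "(\<Sum>k\<le>n. of_nat (n choose k) * q ^ k * f (Suc n - k))
      = f (Suc n) + (\<Sum>k\<le>n. of_nat (n choose Suc k) * q ^ Suc k * f (n - k))"
  proof -
    have "(\<Sum>k\<le>n. of_nat (n choose k) * q ^ k * f (Suc n - k))
        = (\<Sum>k\<le>Suc n. of_nat (n choose k) * q ^ k * f (Suc n - k))"
      by simp
    also have "\<dots> = f (Suc n) + (\<Sum>k\<le>n. of_nat (n choose Suc k) * q ^ Suc k * f (n - k))"
      by (subst sum.atMost_Suc_shift) simp
    finally show ?thesis .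
  qed
  also have "(\<Sum>k\<le>Suc n. of_nat (Suc n choose k) * q ^ k * f (Suc n - k))
      = f (Suc n) + (\<Sum>k\<le>n. of_nat (Suc n choose Suc k) * q ^ Suc k * f (n - k))"
    by (subst sum.atMost_Suc_shift) simp
  ultimately show ?case
    by (simp add: f_def sum.distrib[symmetric] distrib_right add_ac)
qed

lemma mexp_shift:
  fixes R :: "real^'n::finite^'n" and q :: real
  defines "Q \<equiv> (\<chi> a b. R $ a $ b + (if a = b then q else 0))"
  shows "exp (q * t) * mexp t R $ a $ b = mexp t Q $ a $ b"
proof -
  define A where "A i = (q * t) ^ i / fact i" for i
  define B where "B j = t ^ j / fact j * matpow R j $ a $ b" for j
  have sA: "summable (\<lambda>i. norm (A i))"
  proof -
    have "(\<lambda>i. norm (A i)) = (\<lambda>i. inverse (fact i) * \<bar>q * t\<bar> ^ i)"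
      by (rule ext) (simp add: A_def power_abs divide_inverse mult.commute abs_mult)
    then show ?thesis using summable_exp by simp
  qed
  have sB: "summable (\<lambda>i. norm (B i))"
    using summable_mser[of t R 0 a b] by (simp add: B_def)
  have eA: "exp (q * t) = (\<Sum>i. A i)"
    using exp_converges[of "q * t"] unfolding A_def
    by (simp add: sums_iff divide_inverse mult.commute)
  have "exp (q * t) * mexp t R $ a $ b = (\<Sum>i. A i) * (\<Sum>j. B j)"
    by (simp add: eA mexp_def B_def)
  also have "\<dots> = (\<Sum>k. \<Sum>i\<le>k. A i * B (k - i))"
    by (rule Cauchy_product[OF sA sB])
  also have "\<dots> = (\<Sum>k. t ^ k / fact k * matpow Q k $ a $ b)"
  proof (rule suminf_cong)
    fix k
    have "(\<Sum>i\<le>k. A i * B (k - i)) = (\<Sum>i\<le>k. t ^ k / fact k * (of_nat (k choose i) * q ^ i * matpow R (k - i) $ a $ b))"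
    proof (rule sum.cong[OF refl])
      fix i assume "i \<in> {..k}"
      then have ik: "i \<le> k" by simp
      have tk: "t ^ k = t ^ i * t ^ (k - i)" using ik by (simp add: power_add[symmetric])
      have ch: "(of_nat (k choose i) :: real) = fact k / (fact i * fact (k - i))"
        using binomial_fact[OF ik] by simp
      show "A i * B (k - i) = t ^ k / fact k * (of_nat (k choose i) * q ^ i * matpow R (k - i) $ a $ b)"
        unfolding A_def B_def tk ch by (simp add: field_simps power_mult_distrib)
    qed
    also have "\<dots> = t ^ k / fact k * matpow Q k $ a $ b"
      unfolding Q_def matpow_shift_binom by (simp add: sum_distrib_left)
    finally show "(\<Sum>i\<le>k. A i * B (k - i)) = t ^ k / fact k * matpow Q k $ a $ b" .
  qed
  also have "\<dots> = mexp t Q $ a $ b" by (simp add: mexp_def)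
  finally show ?thesis .
qed

lemma matpow_nonneg:
  assumes "\<And>a b. 0 \<le> M $ a $ b" shows "0 \<le> matpow M k $ a $ b"
  by (induction k arbitrary: a b) (auto simp: mat_def matrix_matrix_mult_def assms intro!: sum_nonneg mult_nonneg_nonneg)

lemma mexp_nonneg:
  assumes "\<And>a b. 0 \<le> M $ a $ b" "0 \<le> t" shows "0 \<le> mexp t M $ a $ b"
  unfolding mexp_def vec_lambda_beta using assms
  by (intro suminf_nonneg summable_mser0 mult_nonneg_nonneg matpow_nonneg) auto

lemma mexp_bounds:
  assumes R: "ratem R" and t: "0 \<le> t"
  shows "0 \<le> mexp t R $ a $ b" "mexp t R $ a $ b \<le> 1"
proof -
  define q where "q = (\<Sum>c\<in>UNIV. \<bar>R $ c $ c\<bar>)"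
  define Q where "Q = (\<chi> a b. R $ a $ b + (if a = b then q else 0))"
  have "0 \<le> Q $ a $ b" for a b
  proof (cases "a = b")
    case True
    have "\<bar>R $ a $ a\<bar> \<le> q" unfolding q_def by (rule member_le_sum) auto
    then show ?thesis using True by (simp add: Q_def)
  next
    case False then show ?thesis using R by (simp add: Q_def ratem_def)
  qed
  then have nn: "0 \<le> mexp t Q $ a $ b" for a b using mexp_nonneg t by blast
  have eq: "mexp t R $ a $ b = exp (- (q * t)) * mexp t Q $ a $ b" for a b
    using mexp_shift[of q t R a b] unfolding Q_def[symmetric]
    by (simp add: exp_minus field_simps)
  show pos: "0 \<le> mexp t R $ a $ b" for a b using nn by (simp add: eq)
  have "mexp t R $ a $ b \<le> (\<Sum>c\<in>UNIV. mexp t R $ c $ b)"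
    by (rule member_le_sum) (auto intro: pos)
  then show "mexp t R $ a $ b \<le> 1" using colsum_mexp[OF R] by simp
qed



lemma int_lim:
  fixes g :: "real \<Rightarrow> complex"
  assumes cont: "continuous_on {0..} g" and a: "a > 0"
    and bd: "\<And>t. t \<ge> 0 \<Longrightarrow> norm (g t) \<le> C * exp (- a * t)"
  shows "g integrable_on {0..}" "(\<lambda>n. integral {0..real n} g) \<longlonglongrightarrow> integral {0..} g"
proof -
  have h: "(\<lambda>t. C * exp (- a * t)) integrable_on {0..}"
    using integrable_cmul[OF integrable_on_exp_minus_to_infinity[OF a, of 0], of C] by simp
  have S: "{0::real..} \<in> sets lebesgue" by simp
  show gi: "g integrable_on {0..}"
    by (rule measurable_bounded_by_integrable_imp_integrable[OF continuous_imp_measurable_on_sets_lebesgue[OF cont S] h])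
       (use bd in auto)
  define f where "f k t = (if t \<in> {..real k} then g t else 0)" for k t
  have fi: "f k integrable_on {0..}" for k
  proof -
    have "{..real k} \<inter> {0..} = {0..real k}" by auto
    then show ?thesis
      unfolding f_def integrable_restrict_Int
      by (metis integrable_on_subinterval[OF gi] atLeastatMost_subset_iff order_refl subsetI atLeast_iff atLeastAtMost_iff)
  qed
  have fint: "integral {0..} (f k) = integral {0..real k} g" for k
    unfolding f_def integral_restrict_Int by (simp add: Int_commute atLeastAtMost_def)
  have "(\<lambda>k. integral {0..} (f k)) \<longlonglongrightarrow> integral {0..} g"
  proof (rule dominated_convergence(2)[OF fi h])
    fix k t assume "t \<in> {0::real..}"
    then show "norm (f k t) \<le> C * exp (- a * t)"
      using bd[of t] order_trans[OF norm_ge_zero bd[of t]] by (auto simp: f_def)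
  next
    fix t :: real assume "t \<in> {0..}"
    obtain N where N: "t \<le> real N" using real_arch_simple by blast
    have "eventually (\<lambda>k. f k t = g t) sequentially"
      unfolding eventually_sequentially
      by (rule exI[of _ N]) (use N in \<open>auto simp: f_def\<close>)
    then show "(\<lambda>k. f k t) \<longlonglongrightarrow> g t" by (rule tendsto_eventually)
  qed
  then show "(\<lambda>n. integral {0..real n} g) \<longlonglongrightarrow> integral {0..} g" by (simp add: fint)
qed



lemma mexp_zero: "mexp 0 A $ a $ b = (if a = b then 1 else 0)"
proof -
  have "(\<lambda>k. 0 ^ k / fact k * matpow A k $ a $ b) = (\<lambda>k. if k = 0 then (if a = b then 1 else 0) else 0)"
    by (rule ext) (simp add: mat_def)
  then show ?thesis
    unfolding mexp_def vec_lambda_beta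
    using sums_single[of 0 "\<lambda>_. if a = b then 1 else 0::real"] by (simp add: sums_iff)
qed

lemma mexp_cont: "continuous_on S (\<lambda>t. mexp t A $ a $ b)"
  by (rule continuous_at_imp_continuous_on) (auto intro: DERIV_isCont mexp_deriv)

definition fE :: "real^'n::finite^'n \<Rightarrow> complex \<Rightarrow> 'n \<Rightarrow> 'n \<Rightarrow> real \<Rightarrow> complex" where
  "fE R \<omega> a b t = exp (- \<omega> * complex_of_real t) * complex_of_real (mexp t R $ a $ b)"

lemma Phat_fE: "Phat R \<omega> a b = integral {0..} (fE R \<omega> a b)"
  unfolding Phat_def fE_def ..

lemma fE_cont: "continuous_on S (fE R \<omega> a b)"
  unfolding fE_def by (intro continuous_intros mexp_cont)

lemma norm_exp_w: "norm (exp (- \<omega> * complex_of_real t)) = exp (- Re \<omega> * t)"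
  by simp

lemma fE_bound:
  assumes "ratem R" "0 \<le> t"
  shows "norm (fE R \<omega> a b t) \<le> 1 * exp (- Re \<omega> * t)"
proof -
  have "\<bar>mexp t R $ a $ b\<bar> \<le> 1" using mexp_bounds[OF assms] by auto
  then show ?thesis unfolding fE_def norm_mult norm_exp_w norm_of_real
    by (simp add: mult_left_le)
qed

definition gD :: "real^'n::finite^'n \<Rightarrow> complex \<Rightarrow> 'n \<Rightarrow> 'n \<Rightarrow> real \<Rightarrow> complex" where
  "gD R \<omega> a b t = exp (- \<omega> * complex_of_real t) * complex_of_real (dmexp t R a b)"

lemma gD_left: "gD R \<omega> a b t = (\<Sum>c\<in>UNIV. complex_of_real (R $ a $ c) * fE R \<omega> c b t)"
  unfolding gD_def fE_def dmexp_left by (simp add: sum_distrib_left mult_ac)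

lemma gD_right: "gD R \<omega> a b t = (\<Sum>c\<in>UNIV. fE R \<omega> a c t * complex_of_real (R $ c $ b))"
  unfolding gD_def fE_def dmexp_right by (simp add: sum_distrib_left mult_ac)

lemma gD_cont: "continuous_on S (gD R \<omega> a b)"
  unfolding gD_left[abs_def] by (intro continuous_intros fE_cont)

lemma gD_bound:
  assumes "ratem R" "0 \<le> t"
  shows "norm (gD R \<omega> a b t) \<le> (\<Sum>c\<in>UNIV. \<bar>R $ a $ c\<bar>) * exp (- Re \<omega> * t)"
proof -
  have "norm (gD R \<omega> a b t) \<le> (\<Sum>c\<in>UNIV. norm (complex_of_real (R $ a $ c) * fE R \<omega> c b t))"
    unfolding gD_left by (rule norm_sum)
  also have "\<dots> \<le> (\<Sum>c\<in>UNIV. \<bar>R $ a $ c\<bar> * exp (- Re \<omega> * t))"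
    unfolding norm_mult norm_of_real
    by (intro sum_mono mult_left_mono) (use fE_bound[OF assms] in auto)
  finally show ?thesis by (simp add: sum_distrib_right)
qed

lemma fE_deriv:
  "(fE R \<omega> a b has_vector_derivative (gD R \<omega> a b t - \<omega> * fE R \<omega> a b t)) (at t within S)"
proof -
  have e: "((\<lambda>t. exp (- \<omega> * complex_of_real t)) has_vector_derivative (- \<omega> * exp (- \<omega> * complex_of_real t))) (at t within S)"
  proof (rule has_vector_derivative_real_field)
    show "((\<lambda>z. exp (- \<omega> * z)) has_field_derivative - \<omega> * exp (- \<omega> * complex_of_real t)) (at (complex_of_real t))"
      by (auto intro!: derivative_eq_intros)
  qed
  have m: "((\<lambda>t. complex_of_real (mexp t R $ a $ b)) has_vector_derivative complex_of_real (dmexp t R a b)) (at t within S)"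
    by (rule has_vector_derivative_of_real) (rule DERIV_subset[OF mexp_deriv], simp)
  show ?thesis
    unfolding fE_def[abs_def]
    using has_vector_derivative_mult[OF e m]
    by (simp add: gD_def fE_def algebra_simps)
qed

lemma laplace_core:
  assumes R: "ratem R" and w: "0 < Re \<omega>"
  shows "integral {0..} (gD R \<omega> a b) = \<omega> * Phat R \<omega> a b - (if a = b then 1 else 0)"
proof -
  note L1 = int_lim[OF fE_cont w fE_bound[OF R]]
  note L2 = int_lim[OF gD_cont w gD_bound[OF R]]
  have ftc: "integral {0..real n} (gD R \<omega> a b) - \<omega> * integral {0..real n} (fE R \<omega> a b)
      = fE R \<omega> a b (real n) - (if a = b then 1 else 0)" for n
  proof -
    have X: "integral {0..real n} (\<lambda>t. gD R \<omega> a b t - \<omega> * fE R \<omega> a b t) = fE R \<omega> a b (real n) - fE R \<omega> a b 0"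
      by (rule integral_unique, rule fundamental_theorem_of_calculus) (auto intro: fE_deriv)
    have i1: "(gD R \<omega> a b) integrable_on {0..real n}" and i2: "(\<lambda>t. \<omega> * fE R \<omega> a b t) integrable_on {0..real n}"
      by (auto intro!: integrable_continuous_interval gD_cont integrable_on_mult_right fE_cont)
    have "integral {0..real n} (\<lambda>t. gD R \<omega> a b t - \<omega> * fE R \<omega> a b t)
        = integral {0..real n} (gD R \<omega> a b) - integral {0..real n} (\<lambda>t. \<omega> * fE R \<omega> a b t)"
      by (rule integral_diff[OF i1 i2])
    moreover have "fE R \<omega> a b 0 = (if a = b then 1 else 0)" by (simp add: fE_def mexp_zero)
    ultimately show ?thesis using X by simp
  qed
  have lim1: "(\<lambda>n. integral {0..real n} (gD R \<omega> a b) - \<omega> * integral {0..real n} (fE R \<omega> a b))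
      \<longlonglongrightarrow> integral {0..} (gD R \<omega> a b) - \<omega> * Phat R \<omega> a b"
    unfolding Phat_fE by (intro tendsto_intros L1(2) L2(2))
  have z: "(\<lambda>n. fE R \<omega> a b (real n)) \<longlonglongrightarrow> 0"
  proof (rule Lim_null_comparison)
    show "\<forall>\<^sub>F n in sequentially. norm (fE R \<omega> a b (real n)) \<le> exp (- Re \<omega> * real n)"
      using fE_bound[OF R] by simp
    have "(\<lambda>n. exp (- Re \<omega> * real n)) = (\<lambda>n. exp (- Re \<omega>) ^ n)"
      by (rule ext) (simp add: exp_of_nat_mult[symmetric] mult.commute)
    moreover have "(\<lambda>n. exp (- Re \<omega>) ^ n) \<longlonglongrightarrow> 0"
      by (rule LIMSEQ_realpow_zero) (use w in auto)
    ultimately show "(\<lambda>n. exp (- Re \<omega> * real n)) \<longlonglongrightarrow> 0" by simp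
  qed
  have lim2: "(\<lambda>n. fE R \<omega> a b (real n) - (if a = b then 1 else 0)) \<longlonglongrightarrow> 0 - (if a = b then 1 else 0)"
    by (intro tendsto_intros z)
  have "integral {0..} (gD R \<omega> a b) - \<omega> * Phat R \<omega> a b = 0 - (if a = b then 1 else 0)"
    using LIMSEQ_unique[OF lim1 lim2[folded ftc]] .
  then show ?thesis by (simp add: algebra_simps)
qed

lemma resolvent:
  assumes R: "ratem R" and w: "0 < Re \<omega>"
  shows "(\<Sum>c\<in>UNIV. complex_of_real (R $ a $ c) * Phat R \<omega> c b) = \<omega> * Phat R \<omega> a b - (if a = b then 1 else 0)"
    "(\<Sum>c\<in>UNIV. Phat R \<omega> a c * complex_of_real (R $ c $ b)) = \<omega> * Phat R \<omega> a b - (if a = b then 1 else 0)"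
proof -
  have I: "fE R \<omega> c d integrable_on {0..}" for c d
    using int_lim(1)[OF fE_cont w fE_bound[OF R]] .
  have "integral {0..} (gD R \<omega> a b) = (\<Sum>c\<in>UNIV. complex_of_real (R $ a $ c) * Phat R \<omega> c b)"
    unfolding gD_left[abs_def] Phat_fE
    by (subst integral_sum) (auto intro: I integrable_on_mult_right simp: integral_mult_right)
  then show "(\<Sum>c\<in>UNIV. complex_of_real (R $ a $ c) * Phat R \<omega> c b) = \<omega> * Phat R \<omega> a b - (if a = b then 1 else 0)"
    using laplace_core[OF R w] by simp
  have "integral {0..} (gD R \<omega> a b) = (\<Sum>c\<in>UNIV. Phat R \<omega> a c * complex_of_real (R $ c $ b))"
    unfolding gD_right[abs_def] Phat_fE
    by (subst integral_sum) (auto intro: I integrable_on_mult_left simp: integral_mult_left)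
  then show "(\<Sum>c\<in>UNIV. Phat R \<omega> a c * complex_of_real (R $ c $ b)) = \<omega> * Phat R \<omega> a b - (if a = b then 1 else 0)"
    using laplace_core[OF R w] by simp
qed



lemma key:
  fixes S :: "real^'n::finite^'n" and v u :: "'n \<Rightarrow> complex"
  assumes S: "ratem S" and w: "0 < Re \<omega>"
    and hv: "\<And>a. \<omega> * v a - (\<Sum>c\<in>UNIV. complex_of_real (S $ a $ c) * v c) = s * u a"
  shows "v a = s * (\<Sum>c\<in>UNIV. Phat S \<omega> a c * u c)"
proof -
  let ?P = "Phat S \<omega>"
  have "s * (\<Sum>c\<in>UNIV. ?P a c * u c) = (\<Sum>c\<in>UNIV. ?P a c * (s * u c))"
    by (simp add: sum_distrib_left mult_ac)
  also have "\<dots> = (\<Sum>c\<in>UNIV. ?P a c * (\<omega> * v c - (\<Sum>d\<in>UNIV. complex_of_real (S $ c $ d) * v d)))"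
    by (simp only: hv)
  also have "\<dots> = (\<Sum>c\<in>UNIV. \<omega> * (?P a c * v c)) - (\<Sum>c\<in>UNIV. \<Sum>d\<in>UNIV. ?P a c * complex_of_real (S $ c $ d) * v d)"
    by (simp only: right_diff_distrib sum_subtractf sum_distrib_left mult_ac)
  also have "(\<Sum>c\<in>UNIV. \<Sum>d\<in>UNIV. ?P a c * complex_of_real (S $ c $ d) * v d)
       = (\<Sum>d\<in>UNIV. (\<Sum>c\<in>UNIV. ?P a c * complex_of_real (S $ c $ d)) * v d)"
    by (subst sum.swap) (simp only: sum_distrib_right)
  also have "\<dots> = (\<Sum>d\<in>UNIV. (\<omega> * ?P a d - (if a = d then 1 else 0)) * v d)"
    by (simp only: resolvent(2)[OF S w])
  also have "\<dots> = (\<Sum>d\<in>UNIV. \<omega> * (?P a d * v d)) - (\<Sum>d\<in>UNIV. (if a = d then v d else 0))"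
    by (subst sum_subtractf[symmetric]) (rule sum.cong, auto simp: algebra_simps)
  also have "(\<Sum>d\<in>UNIV. (if a = d then v d else 0)) = v a" by simp
  finally show ?thesis by simp
qed



lemma diag_sum:
  fixes i j :: "'n::finite"
  assumes ij: "i \<noteq> j"
  shows "(\<Sum>c\<in>UNIV - {b}. offrate r i j y c b) = (\<Sum>c\<in>UNIV - {b}. offrate r i j x c b) + (if b = j then y - x else 0)"
proof -
  have "(\<Sum>c\<in>UNIV - {b}. offrate r i j y c b) = (\<Sum>c\<in>UNIV - {b}. offrate r i j x c b + (if c = i \<and> b = j then y - x else 0))"
    by (rule sum.cong) (auto simp: offrate_def)
  also have "\<dots> = (\<Sum>c\<in>UNIV - {b}. offrate r i j x c b) + (\<Sum>c\<in>UNIV - {b}. (if c = i \<and> b = j then y - x else 0))"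
    by (rule sum.distrib)
  also have "(\<Sum>c\<in>UNIV - {b}. (if c = i \<and> b = j then y - x else 0)) = (if b = j then y - x else 0)"
  proof (cases "b = j")
    case True
    then have "(\<Sum>c\<in>UNIV - {b}. (if c = i \<and> b = j then y - x else 0)) = (\<Sum>c\<in>UNIV - {b}. (if c = i then y - x else 0))"
      by simp
    also have "\<dots> = y - x" using True ij by (subst sum.delta) auto
    finally show ?thesis using True by simp
  qed simp
  finally show ?thesis .
qed

lemma R_diff:
  assumes ij: "i \<noteq> j"
  shows "rate_matrix r i j y $ a $ c = rate_matrix r i j x $ a $ c
     + (y - x) * ((if a = i then 1 else 0) - (if a = j then 1 else 0)) * (if c = j then 1 else 0)"
proof (cases "a = c")
  case True
  then show ?thesis unfolding rate_matrix_def vec_lambda_beta diag_sum[OF ij, of r y c x]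
    using ij by auto
next
  case False
  then show ?thesis unfolding rate_matrix_def vec_lambda_beta using ij by (auto simp: offrate_def)
qed

lemma ratem_R:
  assumes nonneg: "\<And>a b. a \<noteq> b \<Longrightarrow> r a b \<ge> 0" and y: "y > 0"
  shows "ratem (rate_matrix r i j y)"
  unfolding ratem_def
proof safe
  fix a b :: 'a assume "a \<noteq> b"
  then show "0 \<le> rate_matrix r i j y $ a $ b"
    using nonneg y by (auto simp: rate_matrix_def offrate_def)
next
  fix b :: 'a
  have "(\<Sum>a\<in>UNIV. rate_matrix r i j y $ a $ b) = rate_matrix r i j y $ b $ b + (\<Sum>a\<in>UNIV - {b}. rate_matrix r i j y $ a $ b)"
    by (subst sum.remove[of UNIV b]) auto
  also have "(\<Sum>a\<in>UNIV - {b}. rate_matrix r i j y $ a $ b) = (\<Sum>a\<in>UNIV - {b}. offrate r i j y a b)"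
    by (rule sum.cong) (auto simp: rate_matrix_def)
  finally show "(\<Sum>a\<in>UNIV. rate_matrix r i j y $ a $ b) = 0"
    by (simp add: rate_matrix_def)
qed



theorem theorem3:
  fixes r :: "'n::finite \<Rightarrow> 'n \<Rightarrow> real"
    and i j :: 'n
    and A1 A2 :: "'n \<Rightarrow> real" and B1 B2 :: "'n \<Rightarrow> 'n \<Rightarrow> real"
    and \<omega> :: complex and x :: real
  assumes nonneg: "\<And>a b. a \<noteq> b \<Longrightarrow> r a b \<ge> 0"
    and ij: "i \<noteq> j"
    and irred: "\<And>y. y > 0 \<Longrightarrow> irreducible_rates (rate_matrix r i j y)"
    and \<omega>: "Re \<omega> > 0"
    and x: "x > 0"
    and den: "(\<Sum>l\<in>UNIV. complex_of_real (coef A2 B2 r i j l) *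
               (Phat (rate_matrix r i j x) \<omega> l i - Phat (rate_matrix r i j x) \<omega> l j)) \<noteq> 0"
  shows "((\<lambda>y. chi_hat r i j A1 B1 A2 B2 \<omega> y) has_vector_derivative 0) (at x)"
proof -
  define R where "R z = rate_matrix r i j z" for z
  define w where "w z a = Phat (R z) \<omega> a i - Phat (R z) \<omega> a j" for z a
  define u :: "'n \<Rightarrow> complex" where "u a = (if a = i then 1 else 0) - (if a = j then 1 else 0)" for a
  define N where "N A B z = (\<Sum>l\<in>UNIV. complex_of_real (coef A B r i j l) * w z l)" for A B z
  have chi: "chi_hat r i j A1 B1 A2 B2 \<omega> z = N A1 B1 z / N A2 B2 z" for z
    by (simp add: chi_hat_def N_def w_def R_def)
  have Rx: "ratem (R x)" unfolding R_def by (rule ratem_R[OF nonneg x])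
  have rx: "(\<Sum>c\<in>UNIV. complex_of_real (R x $ a $ c) * w x c) = \<omega> * w x a - u a" for a
  proof -
    have "(\<Sum>c\<in>UNIV. complex_of_real (R x $ a $ c) * w x c)
        = (\<Sum>c\<in>UNIV. complex_of_real (R x $ a $ c) * Phat (R x) \<omega> c i) - (\<Sum>c\<in>UNIV. complex_of_real (R x $ a $ c) * Phat (R x) \<omega> c j)"
      unfolding w_def by (simp add: right_diff_distrib sum_subtractf)
    also have "\<dots> = \<omega> * w x a - u a"
      unfolding resolvent(1)[OF Rx \<omega>] w_def u_def by (simp add: algebra_simps)
    finally show ?thesis .
  qed
  have same: "chi_hat r i j A1 B1 A2 B2 \<omega> y = chi_hat r i j A1 B1 A2 B2 \<omega> x" if y: "y > 0" for y
  proof -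
    have Ry: "ratem (R y)" unfolding R_def by (rule ratem_R[OF nonneg y])
    define s where "s = 1 - complex_of_real (y - x) * w x j"
    have hv: "\<omega> * w x a - (\<Sum>c\<in>UNIV. complex_of_real (R y $ a $ c) * w x c) = s * u a" for a
    proof -
      have e: "complex_of_real (R y $ a $ c) = complex_of_real (R x $ a $ c) + complex_of_real (y - x) * u a * (if c = j then 1 else 0)" for c
        unfolding R_def R_diff[OF ij, of r y a c x] u_def by simp
      have "(\<Sum>c\<in>UNIV. complex_of_real (R y $ a $ c) * w x c)
          = (\<Sum>c\<in>UNIV. complex_of_real (R x $ a $ c) * w x c) + (\<Sum>c\<in>UNIV. (if c = j then complex_of_real (y - x) * u a * w x c else 0))"
        unfolding e by (subst sum.distrib[symmetric]) (rule sum.cong, auto simp: algebra_simps)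
      also have "\<dots> = \<omega> * w x a - u a + complex_of_real (y - x) * u a * w x j"
        by (simp add: rx)
      finally show ?thesis by (simp add: s_def algebra_simps)
    qed
    have wx: "w x a = s * w y a" for a
    proof -
      have "w x a = s * (\<Sum>c\<in>UNIV. Phat (R y) \<omega> a c * u c)"
        by (rule key[OF Ry \<omega> hv])
      also have "(\<Sum>c\<in>UNIV. Phat (R y) \<omega> a c * u c) = w y a"
      proof -
        have "(\<Sum>c\<in>UNIV. Phat (R y) \<omega> a c * u c) = (\<Sum>c\<in>UNIV. (if c = i then Phat (R y) \<omega> a c else 0)) - (\<Sum>c\<in>UNIV. (if c = j then Phat (R y) \<omega> a c else 0))"
          by (subst sum_subtractf[symmetric]) (rule sum.cong, auto simp: u_def)
        then show ?thesis by (simp add: w_def)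
      qed
      finally show ?thesis .
    qed
    have Nx: "N A B x = s * N A B y" for A B
      unfolding N_def wx by (simp add: sum_distrib_left mult_ac)
    have d: "N A2 B2 x \<noteq> 0" using den by (simp add: N_def w_def R_def)
    then have "s \<noteq> 0" "N A2 B2 y \<noteq> 0" by (auto simp: Nx)
    then show ?thesis unfolding chi Nx by simp
  qed
  have "((\<lambda>y. chi_hat r i j A1 B1 A2 B2 \<omega> x) has_vector_derivative 0) (at x)"
    by (rule has_vector_derivative_const)
  then show ?thesis
  proof (rule has_vector_derivative_transform_within_open[OF _ open_greaterThan])
    show "x \<in> {0<..}" using x by simp
    fix y :: real assume "y \<in> {0<..}"
    then have "y > 0" by simp
    from same[OF this] show "chi_hat r i j A1 B1 A2 B2 \<omega> x = chi_hat r i j A1 B1 A2 B2 \<omega> y" by simp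
  qed
qed

end
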